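(* Let $Y=(\ell_2,|||\cdot|||)$ be the renorming of $\ell_2$ described in the context. Then $e_1$ and $e_1+e_n$ ($n\ge2$) are extreme points of $B_Y$, and $e_1^*$ and $e_1^*-2e_n^*$ ($n\ge2$) are extreme points of $B_{Y^*}$.
   Context: Let $(e_n)$ be the unit vector basis of $\ell_2$ and $(e_n^* )$ the biorthogonal functionals (identified with elements of $\ell_2$ via the standard duality). Define an equivalent norm $\|\cdot\|$ on $\ell_2$ whose unit ball is the $\|\cdot\|_2$-closed convex hull of $B_{\ell_2}\cup\{\pm(e_1+e_n):n\ge2\}$. For $x=\sum_n x_ne_n$ put $|||x|||=\max\{\|x\|,\sup_{n\ge2}|x_1-2x_n|\}$ and $Y=(\ell_2,|||\cdot|||)$; $Y^*$ carries the dual norm. *)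

theory Defs
  imports "HOL-Analysis.Analysis"
begin

text \<open>Sequences are indexed by nat; coordinate 0 is unused (forced to 0) so that
  the unit vectors e 1, e 2, ... match the paper's indexing.\<close>

definition ell2 :: "(nat \<Rightarrow> real) set" where
  "ell2 = {x. x 0 = 0 \<and> summable (\<lambda>n. (x n)\<^sup>2)}"

definition l2norm :: "(nat \<Rightarrow> real) \<Rightarrow> real" where
  "l2norm x = sqrt (\<Sum>n. (x n)\<^sup>2)"

definition unitvec :: "nat \<Rightarrow> nat \<Rightarrow> real" ("e") where
  "e n = (\<lambda>j. if j = n then 1 else 0)"

definition pairing :: "(nat \<Rightarrow> real) \<Rightarrow> (nat \<Rightarrow> real) \<Rightarrow> real" where
  "pairing y x = (\<Sum>n. y n * x n)"

definition seq_convex_hull :: "(nat \<Rightarrow> real) set \<Rightarrow> (nat \<Rightarrow> real) set" where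
  "seq_convex_hull S = {x. \<exists>(k::nat) (c::nat \<Rightarrow> real) (p::nat \<Rightarrow> nat \<Rightarrow> real).
      (\<forall>i<k. 0 \<le> c i \<and> p i \<in> S) \<and> (\<Sum>i<k. c i) = 1 \<and>
      x = (\<lambda>j. \<Sum>i<k. c i * p i j)}"

definition l2_closure :: "(nat \<Rightarrow> real) set \<Rightarrow> (nat \<Rightarrow> real) set" where
  "l2_closure S = {x \<in> ell2. \<forall>\<epsilon>>0. \<exists>y\<in>S. l2norm (\<lambda>j. x j - y j) < \<epsilon>}"

definition B_ell2 :: "(nat \<Rightarrow> real) set" where
  "B_ell2 = {x \<in> ell2. l2norm x \<le> 1}"

definition Kball :: "(nat \<Rightarrow> real) set" where
  "Kball = l2_closure (seq_convex_hull (B_ell2 \<union>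
     {(\<lambda>j. s * (e 1 j + e n j)) | s n. s \<in> {1, -1} \<and> n \<ge> 2}))"

definition knorm :: "(nat \<Rightarrow> real) \<Rightarrow> real" where
  "knorm x = Inf {t. t > 0 \<and> (\<lambda>j. x j / t) \<in> Kball}"

definition ynorm :: "(nat \<Rightarrow> real) \<Rightarrow> real" where
  "ynorm x = max (knorm x) (SUP n\<in>{2..}. \<bar>x 1 - 2 * x n\<bar>)"

definition B_Y :: "(nat \<Rightarrow> real) set" where
  "B_Y = {x \<in> ell2. ynorm x \<le> 1}"

text \<open>Dual norm, with Y* identified with ell2 via the standard duality.\<close>
definition ydualnorm :: "(nat \<Rightarrow> real) \<Rightarrow> real" where
  "ydualnorm y = (SUP x\<in>B_Y. pairing y x)"

definition B_Ydual :: "(nat \<Rightarrow> real) set" where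
  "B_Ydual = {y \<in> ell2. ydualnorm y \<le> 1}"

definition is_extreme_point :: "(nat \<Rightarrow> real) \<Rightarrow> (nat \<Rightarrow> real) set \<Rightarrow> bool" where
  "is_extreme_point x S \<longleftrightarrow> x \<in> S \<and>
     \<not> (\<exists>a\<in>S. \<exists>b\<in>S. a \<noteq> b \<and> (\<exists>t. 0 < t \<and> t < 1 \<and> x = (\<lambda>j. (1 - t) * a j + t * b j)))"

end

theory Submission
  imports Defs
begin


lemma pairing_fin:
  assumes "finite F" "\<And>j. j \<notin> F \<Longrightarrow> y j * x j = 0"
  shows "pairing y x = (\<Sum>j\<in>F. y j * x j)"
  unfolding pairing_def by (rule suminf_finite) (use assms in auto)

lemma comb_eq:
  fixes u v c t :: real
  assumes "u \<le> c" "v \<le> c" "0 < t" "t < 1" "(1 - t) * u + t * v = c"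
  shows "u = c \<and> v = c"
proof -
  have "(1-t)*(c-u) + t*(c-v) = 0" using assms(5) by (simp add: algebra_simps)
  moreover have "(1-t)*(c-u) \<ge> 0" "t*(c-v) \<ge> 0" using assms by auto
  ultimately have "(1-t)*(c-u) = 0" "t*(c-v) = 0" by linarith+
  thus ?thesis using assms by auto
qed

lemma ell2_tendsto: assumes "x \<in> ell2" shows "x \<longlonglongrightarrow> 0"
proof -
  have "(\<lambda>n. (x n)\<^sup>2) \<longlonglongrightarrow> 0" using assms unfolding ell2_def
    using summable_LIMSEQ_zero[of "\<lambda>n. (x n)\<^sup>2"] by auto
  hence "(\<lambda>n. sqrt ((x n)\<^sup>2)) \<longlonglongrightarrow> sqrt 0" by (rule tendsto_real_sqrt)
  hence "(\<lambda>n. \<bar>x n\<bar>) \<longlonglongrightarrow> 0" by simp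
  thus ?thesis by (rule tendsto_rabs_zero_cancel)
qed

lemma Ysup:
  assumes "x \<in> ell2" "ynorm x \<le> 1"
  shows "\<forall>m\<ge>2. \<bar>x 1 - 2 * x m\<bar> \<le> 1" "x 1 \<le> 1"
proof -
  have t: "x \<longlonglongrightarrow> 0" using ell2_tendsto assms by blast
  then obtain K where K: "\<And>n. norm (x n) \<le> K" using convergent_imp_Bseq[OF convergentI[OF t]] BseqE by metis
  have bdd: "bdd_above ((\<lambda>n. \<bar>x 1 - 2 * x n\<bar>) ` {2..})"
  proof (rule bdd_aboveI2)
    fix n have "\<bar>x n\<bar> \<le> K" using K[of n] by simp
    thus "\<bar>x 1 - 2 * x n\<bar> \<le> \<bar>x 1\<bar> + 2*K" by linarith
  qed
  have s: "(SUP n\<in>{2..}. \<bar>x 1 - 2 * x n\<bar>) \<le> 1" using assms(2) unfolding ynorm_def by simp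
  show a: "\<forall>m\<ge>2. \<bar>x 1 - 2 * x m\<bar> \<le> 1"
  proof (intro allI impI)
    fix m :: nat assume "m \<ge> 2"
    hence "\<bar>x 1 - 2 * x m\<bar> \<le> (SUP n\<in>{2..}. \<bar>x 1 - 2 * x n\<bar>)"
      using bdd by (intro cSUP_upper) auto
    thus "\<bar>x 1 - 2 * x m\<bar> \<le> 1" using s by linarith
  qed
  have "(\<lambda>n. x 1 - 2 * x n) \<longlonglongrightarrow> x 1 - 2 * 0" by (intro tendsto_intros t)
  hence "(\<lambda>n. x 1 - 2 * x n) \<longlonglongrightarrow> x 1" by simp
  thus "x 1 \<le> 1"
    by (rule LIMSEQ_le_const2) (use a in force)
qed




lemma jensen_sq:
  fixes c z :: "nat \<Rightarrow> real"
  assumes "\<forall>i<k. 0 \<le> c i" "(\<Sum>i<k. c i) = 1"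
  shows "(\<Sum>i<k. c i * z i)\<^sup>2 \<le> (\<Sum>i<k. c i * (z i)\<^sup>2)"
proof -
  define m where "m = (\<Sum>i<k. c i * z i)"
  have "0 \<le> (\<Sum>i<k. c i * (z i - m)\<^sup>2)" using assms(1) by (intro sum_nonneg) auto
  also have "\<dots> = (\<Sum>i<k. c i * (z i)\<^sup>2) - 2 * m * (\<Sum>i<k. c i * z i) + m\<^sup>2 * (\<Sum>i<k. c i)"
    by (simp add: power2_eq_square algebra_simps sum.distrib sum_subtractf sum_distrib_left sum_distrib_right)
  also have "\<dots> = (\<Sum>i<k. c i * (z i)\<^sup>2) - m\<^sup>2" using assms(2) by (simp add: m_def power2_eq_square)
  finally show ?thesis by (simp add: m_def)
qed

definition G :: "(nat \<Rightarrow> real) set" where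
  "G = {(\<lambda>j. s * (e 1 j + e n j)) | s n. s \<in> {1, -1} \<and> n \<ge> 2}"

lemma Kball_G: "Kball = l2_closure (seq_convex_hull (B_ell2 \<union> G))"
  unfolding Kball_def G_def ..

lemma gen_props:
  assumes "p \<in> B_ell2 \<union> G"
  shows "summable (\<lambda>j. (p j)\<^sup>2) \<and> (\<Sum>j. (p j)\<^sup>2) \<le> 2"
  using assms
proof
  assume "p \<in> B_ell2"
  hence s: "summable (\<lambda>j. (p j)\<^sup>2)" and "sqrt (\<Sum>j. (p j)\<^sup>2) \<le> 1"
    unfolding B_ell2_def ell2_def l2norm_def by auto
  hence "(\<Sum>j. (p j)\<^sup>2) \<le> 1" by simp
  thus ?thesis using s by simp
next
  assume "p \<in> G"
  then obtain s n where p: "p = (\<lambda>j. s * (e 1 j + e n j))" and sn: "s \<in> {1,-1}" "n \<ge> 2"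
    unfolding G_def by blast
  have z: "\<And>j. j \<notin> {1,n} \<Longrightarrow> (p j)\<^sup>2 = 0" by (simp add: p unitvec_def)
  have "summable (\<lambda>j. (p j)\<^sup>2)" by (rule summable_finite[of "{1,n}"]) (use z in auto)
  moreover have "(\<Sum>j. (p j)\<^sup>2) = (\<Sum>j\<in>{1,n}. (p j)\<^sup>2)" by (rule suminf_finite) (use z in auto)
  moreover have "(\<Sum>j\<in>{1,n}. (p j)\<^sup>2) = 2" using sn by (auto simp: p unitvec_def)
  ultimately show ?thesis by simp
qed



lemma hull_bound:
  assumes "x \<in> seq_convex_hull (B_ell2 \<union> G)"
  shows "summable (\<lambda>j. (x j)\<^sup>2) \<and> (\<Sum>j. (x j)\<^sup>2) \<le> 2"
proof -
  obtain k :: nat and c :: "nat \<Rightarrow> real" and p :: "nat \<Rightarrow> nat \<Rightarrow> real" where cp: "\<forall>i<k. 0 \<le> c i \<and> p i \<in> B_ell2 \<union> G" "(\<Sum>i<k. c i) = 1"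
    and x: "x = (\<lambda>j. \<Sum>i<k. c i * p i j)"
    using assms unfolding seq_convex_hull_def mem_Collect_eq by (elim exE conjE) (rule that; assumption)
  have gp1: "summable (\<lambda>j. (p i j)\<^sup>2)" and gp2: "(\<Sum>j. (p i j)\<^sup>2) \<le> 2" if "i < k" for i
    using gen_props[of "p i"] cp that by auto
  have le: "(x j)\<^sup>2 \<le> (\<Sum>i<k. c i * (p i j)\<^sup>2)" for j
    unfolding x by (rule jensen_sq) (use cp in auto)
  have sm: "summable (\<lambda>j. c i * (p i j)\<^sup>2)" if "i \<in> {..<k}" for i
    using summable_mult[OF gp1[of i], of "c i"] that by simp
  have sR: "summable (\<lambda>j. \<Sum>i<k. c i * (p i j)\<^sup>2)"
    by (rule summable_sum) (rule sm)
  have sx: "summable (\<lambda>j. (x j)\<^sup>2)"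
    by (rule summable_comparison_test'[OF sR, of 0]) (simp add: le)
  have "(\<Sum>j. (x j)\<^sup>2) \<le> (\<Sum>j. \<Sum>i<k. c i * (p i j)\<^sup>2)"
    by (rule suminf_le[OF _ sx sR]) (rule le)
  also have "\<dots> = (\<Sum>i<k. \<Sum>j. c i * (p i j)\<^sup>2)"
    by (rule suminf_sum) (rule sm)
  also have "\<dots> = (\<Sum>i<k. c i * (\<Sum>j. (p i j)\<^sup>2))"
    by (rule sum.cong) (simp_all add: suminf_mult gp1)
  also have "\<dots> \<le> (\<Sum>i<k. c i * 2)"
    by (rule sum_mono) (simp add: cp gp2 mult_left_mono)
  also have "\<dots> = 2" using cp(2) by (simp add: sum_distrib_right[symmetric])
  finally show ?thesis using sx by simp
qed

lemma Kball_bound: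
  assumes "x \<in> Kball"
  shows "summable (\<lambda>j. (x j)\<^sup>2) \<and> (\<Sum>j. (x j)\<^sup>2) \<le> 6"
proof -
  have xe: "x \<in> ell2" and ap: "\<forall>\<epsilon>>0. \<exists>y\<in>seq_convex_hull (B_ell2 \<union> G). l2norm (\<lambda>j. x j - y j) < \<epsilon>"
    using assms unfolding Kball_G l2_closure_def by auto
  then obtain y where y: "y \<in> seq_convex_hull (B_ell2 \<union> G)" and d: "l2norm (\<lambda>j. x j - y j) < 1"
    by (meson zero_less_one)
  have sx: "summable (\<lambda>j. (x j)\<^sup>2)" using xe unfolding ell2_def by auto
  have sy: "summable (\<lambda>j. (y j)\<^sup>2)" and by2: "(\<Sum>j. (y j)\<^sup>2) \<le> 2" using hull_bound[OF y] by auto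
  have led: "(x j - y j)\<^sup>2 \<le> 2 * (x j)\<^sup>2 + 2 * (y j)\<^sup>2" for j
  proof -
    have "0 \<le> (x j + y j)\<^sup>2" by simp
    thus ?thesis by (simp add: power2_eq_square algebra_simps)
  qed
  have s2: "summable (\<lambda>j. 2 * (x j)\<^sup>2 + 2 * (y j)\<^sup>2)"
    by (intro summable_add summable_mult sx sy)
  have sd: "summable (\<lambda>j. (x j - y j)\<^sup>2)"
    by (rule summable_comparison_test'[OF s2, of 0]) (simp add: led)
  have d1: "(\<Sum>j. (x j - y j)\<^sup>2) < 1" using d unfolding l2norm_def by simp
  have lex: "(x j)\<^sup>2 \<le> 2 * (y j)\<^sup>2 + 2 * (x j - y j)\<^sup>2" for j
  proof -
    have "0 \<le> (x j - 2 * y j)\<^sup>2" by simp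
    thus ?thesis by (simp add: power2_eq_square algebra_simps)
  qed
  have s3: "summable (\<lambda>j. 2 * (y j)\<^sup>2 + 2 * (x j - y j)\<^sup>2)"
    by (intro summable_add summable_mult sy sd)
  have "(\<Sum>j. (x j)\<^sup>2) \<le> (\<Sum>j. 2 * (y j)\<^sup>2 + 2 * (x j - y j)\<^sup>2)"
    by (rule suminf_le[OF _ sx s3]) (rule lex)
  also have "\<dots> = 2 * (\<Sum>j. (y j)\<^sup>2) + 2 * (\<Sum>j. (x j - y j)\<^sup>2)"
    using sy sd by (simp add: suminf_add[symmetric] suminf_mult summable_mult)
  also have "\<dots> \<le> 6" using by2 d1 by linarith
  finally show ?thesis using sx by simp
qed



lemma fin_sq:
  fixes x :: "nat \<Rightarrow> real"
  assumes "finite F" "\<And>j. j \<notin> F \<Longrightarrow> x j = 0"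
  shows "summable (\<lambda>j. (x j)\<^sup>2) \<and> (\<Sum>j. (x j)\<^sup>2) = (\<Sum>j\<in>F. (x j)\<^sup>2)"
proof
  show "summable (\<lambda>j. (x j)\<^sup>2)" by (rule summable_finite[OF assms(1)]) (simp add: assms(2) power2_eq_square)
  show "(\<Sum>j. (x j)\<^sup>2) = (\<Sum>j\<in>F. (x j)\<^sup>2)" by (rule suminf_finite[OF assms(1)]) (simp add: assms(2) power2_eq_square)
qed

lemma in_Kball:
  assumes "z \<in> B_ell2 \<union> G" "z \<in> ell2"
  shows "z \<in> Kball"
proof -
  have h: "z \<in> seq_convex_hull (B_ell2 \<union> G)"
    unfolding seq_convex_hull_def mem_Collect_eq
    by (rule exI[of _ 1], rule exI[of _ "\<lambda>_. 1"], rule exI[of _ "\<lambda>_. z"]) (use assms in auto)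
  have "l2norm (\<lambda>j. z j - z j) = 0" by (simp add: l2norm_def)
  thus ?thesis unfolding Kball_G l2_closure_def using h assms(2) by force
qed

lemma knorm_le1:
  assumes "z \<in> Kball" shows "knorm z \<le> 1"
  unfolding knorm_def
  by (rule cInf_lower) (use assms in \<open>auto intro: bdd_belowI[of _ 0]\<close>)

lemma ynorm_le1:
  assumes "knorm x \<le> 1" "\<And>n. n \<ge> 2 \<Longrightarrow> \<bar>x 1 - 2 * x n\<bar> \<le> 1"
  shows "ynorm x \<le> 1"
proof -
  have "(SUP n\<in>{2..}. \<bar>x 1 - 2 * x n\<bar>) \<le> 1"
    by (rule cSUP_least) (use assms(2) in blast)+
  thus ?thesis unfolding ynorm_def using assms(1) by simp
qed

lemma BY_bound:
  assumes "x \<in> B_Y"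
  shows "summable (\<lambda>j. (x j)\<^sup>2) \<and> (\<Sum>j. (x j)\<^sup>2) \<le> 24"
proof -
  have xe: "x \<in> ell2" and kn: "knorm x \<le> 1" using assms unfolding B_Y_def ynorm_def by auto
  have sx: "summable (\<lambda>j. (x j)\<^sup>2)" using xe unfolding ell2_def by auto
  define Q where "Q = (\<Sum>j. (x j)\<^sup>2)"
  have Q0: "0 \<le> Q" unfolding Q_def by (rule suminf_nonneg[OF sx]) simp
  define S where "S = {t. t > 0 \<and> (\<lambda>j. x j / t) \<in> Kball}"
  have scale: "summable (\<lambda>j. (x j / t)\<^sup>2) \<and> (\<Sum>j. (x j / t)\<^sup>2) = Q / t\<^sup>2" for t
  proof -
    have "(\<lambda>j. (x j / t)\<^sup>2) = (\<lambda>j. (x j)\<^sup>2 / t\<^sup>2)" by (simp add: power_divide)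
    thus ?thesis using sx by (simp add: summable_divide suminf_divide Q_def)
  qed
  have "Q + 1 \<in> S"
  proof -
    define t where "t = Q + 1"
    have t1: "1 \<le> t" "0 < t" using Q0 by (auto simp: t_def)
    have "0 \<le> Q*Q" by simp
    hence "Q \<le> t\<^sup>2" using Q0 by (simp add: t_def power2_eq_square algebra_simps)
    hence "Q / t\<^sup>2 \<le> 1" using t1 by (simp add: divide_le_eq_1)
    hence "l2norm (\<lambda>j. x j / t) \<le> 1" using scale[of t] by (simp add: l2norm_def)
    moreover have "(\<lambda>j. x j / t) \<in> ell2" using scale[of t] xe by (simp add: ell2_def)
    ultimately have "(\<lambda>j. x j / t) \<in> Kball" by (intro in_Kball) (auto simp: B_ell2_def)
    thus ?thesis using t1 by (simp add: S_def t_def)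
  qed
  hence ne: "S \<noteq> {}" by auto
  have bb: "bdd_below S" unfolding S_def by (rule bdd_belowI[of _ 0]) auto
  have "Inf S < 2" using kn unfolding knorm_def S_def[symmetric] by simp
  then obtain t where tS: "t \<in> S" and t2: "t < 2" using cInf_less_iff[OF ne bb] by auto
  have tp: "t > 0" and tK: "(\<lambda>j. x j / t) \<in> Kball" using tS by (auto simp: S_def)
  have "Q / t\<^sup>2 \<le> 6" using Kball_bound[OF tK] scale[of t] by simp
  hence "Q \<le> 6 * t\<^sup>2" using tp by (simp add: divide_le_eq)
  also have "\<dots> \<le> 24"
  proof -
    have "t*t \<le> 2*2" using mult_mono[of t 2 t 2] tp t2 by simp
    thus ?thesis by (simp add: power2_eq_square)
  qed
  finally show ?thesis using sx Q_def by simp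
qed

lemma pairing_bound:
  assumes "a \<in> ell2" "x \<in> B_Y"
  shows "pairing a x \<le> ((\<Sum>j. (a j)\<^sup>2) + 24) / 2"
proof -
  have sa: "summable (\<lambda>j. (a j)\<^sup>2)" using assms(1) unfolding ell2_def by auto
  have sx: "summable (\<lambda>j. (x j)\<^sup>2)" and bx: "(\<Sum>j. (x j)\<^sup>2) \<le> 24" using BY_bound[OF assms(2)] by auto
  have le: "\<bar>a j * x j\<bar> \<le> ((a j)\<^sup>2 + (x j)\<^sup>2) / 2" for j
  proof -
    have "0 \<le> (\<bar>a j\<bar> - \<bar>x j\<bar>)\<^sup>2" by simp
    hence "2*(\<bar>a j\<bar>*\<bar>x j\<bar>) \<le> \<bar>a j\<bar>\<^sup>2 + \<bar>x j\<bar>\<^sup>2" by (simp add: power2_eq_square algebra_simps)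
    thus ?thesis by (simp add: abs_mult)
  qed
  have s2: "summable (\<lambda>j. ((a j)\<^sup>2 + (x j)\<^sup>2) / 2)"
    by (intro summable_divide summable_add sa sx)
  have sp: "summable (\<lambda>j. a j * x j)"
    by (rule summable_comparison_test'[OF s2, of 0]) (simp only: real_norm_def le)
  have "pairing a x \<le> (\<Sum>j. ((a j)\<^sup>2 + (x j)\<^sup>2) / 2)"
    unfolding pairing_def by (rule suminf_le[OF _ sp s2]) (metis le abs_ge_self order_trans)
  also have "\<dots> = ((\<Sum>j. (a j)\<^sup>2) + (\<Sum>j. (x j)\<^sup>2)) / 2"
    using suminf_divide[OF summable_add[OF sa sx], of 2] suminf_add[OF sa sx] by simp
  also have "\<dots> \<le> ((\<Sum>j. (a j)\<^sup>2) + 24) / 2" using bx by simp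
  finally show ?thesis .
qed

lemma dual_le:
  assumes "a \<in> B_Ydual" "x \<in> B_Y"
  shows "pairing a x \<le> 1"
proof -
  have ae: "a \<in> ell2" and d: "ydualnorm a \<le> 1" using assms(1) unfolding B_Ydual_def by auto
  have "bdd_above ((\<lambda>x. pairing a x) ` B_Y)"
    by (rule bdd_aboveI2[of _ _ "((\<Sum>j. (a j)\<^sup>2) + 24) / 2"]) (rule pairing_bound[OF ae])
  hence "pairing a x \<le> ydualnorm a" unfolding ydualnorm_def by (rule cSUP_upper[OF assms(2)])
  thus ?thesis using d by simp
qed




lemma ell2_fin:
  fixes x :: "nat \<Rightarrow> real"
  assumes "x 0 = 0" "finite F" "\<And>j. j \<notin> F \<Longrightarrow> x j = 0"
  shows "x \<in> ell2"
  using fin_sq[OF assms(2,3)] assms(1) by (simp add: ell2_def)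

lemma mem_BY:
  assumes "x \<in> B_ell2 \<union> G" "x \<in> ell2" "\<And>n. n \<ge> 2 \<Longrightarrow> \<bar>x 1 - 2 * x n\<bar> \<le> 1"
  shows "x \<in> B_Y"
  using ynorm_le1[OF knorm_le1[OF in_Kball[OF assms(1,2)]] assms(3)] assms(2)
  by (simp add: B_Y_def)

lemma e1_ell2: "e 1 \<in> ell2"
  by (rule ell2_fin[of _ "{1}"]) (auto simp: unitvec_def)

lemma e1_BY: "e 1 \<in> B_Y"
proof (rule mem_BY)
  have "(\<Sum>j. (e 1 j)\<^sup>2) = (\<Sum>j\<in>{1}. (e 1 j)\<^sup>2)"
    using fin_sq[of "{1}" "e 1"] by (auto simp: unitvec_def)
  hence "l2norm (e 1) = 1" by (simp add: l2norm_def unitvec_def)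
  thus "e 1 \<in> B_ell2 \<union> G" using e1_ell2 by (simp add: B_ell2_def)
  show "e 1 \<in> ell2" by (rule e1_ell2)
qed (auto simp: unitvec_def)

lemma v_G: "n \<ge> 2 \<Longrightarrow> (\<lambda>j. e 1 j + e n j) \<in> G"
  unfolding G_def by (rule CollectI, rule exI[of _ 1], rule exI[of _ n]) auto

lemma v_ell2: "n \<ge> 2 \<Longrightarrow> (\<lambda>j. e 1 j + e n j) \<in> ell2"
  by (rule ell2_fin[of _ "{1,n}"]) (auto simp: unitvec_def)

lemma v_BY: assumes "n \<ge> 2" shows "(\<lambda>j. e 1 j + e n j) \<in> B_Y"
proof (rule mem_BY)
  show "(\<lambda>j. e 1 j + e n j) \<in> B_ell2 \<union> G" using v_G[OF assms] by blast
  show "(\<lambda>j. e 1 j + e n j) \<in> ell2" using v_ell2[OF assms] .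
  fix m :: nat assume "m \<ge> 2"
  thus "\<bar>e 1 1 + e n 1 - 2 * (e 1 m + e n m)\<bar> \<le> 1" using assms by (auto simp: unitvec_def)
qed

lemma w_BY: assumes "n \<ge> 2" shows "(\<lambda>j. -(1/2) * e n j) \<in> B_Y"
proof (rule mem_BY)
  have we: "(\<lambda>j. -(1/2) * e n j) \<in> ell2"
    by (rule ell2_fin[of _ "{n}"]) (use assms in \<open>auto simp: unitvec_def\<close>)
  thus "(\<lambda>j. -(1/2) * e n j) \<in> ell2" .
  have "(\<Sum>j. (-(1/2) * e n j)\<^sup>2) = (\<Sum>j\<in>{n}. (-(1/2) * e n j)\<^sup>2)"
    using fin_sq[of "{n}" "\<lambda>j. -(1/2) * e n j"] by (auto simp: unitvec_def)
  hence "(\<Sum>j. (-(1/2) * e n j)\<^sup>2) = 1/4" by (simp add: unitvec_def power2_eq_square)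
  hence "l2norm (\<lambda>j. -(1/2) * e n j) \<le> 1" by (simp add: l2norm_def)
  thus "(\<lambda>j. -(1/2) * e n j) \<in> B_ell2 \<union> G" using we by (simp add: B_ell2_def)
  fix m :: nat assume "m \<ge> 2"
  thus "\<bar>(-(1/2) * e n 1) - 2 * (-(1/2) * e n m)\<bar> \<le> 1" using assms by (auto simp: unitvec_def)
qed

lemma BY_props:
  assumes "x \<in> B_Y"
  shows "x 0 = 0" "x 1 \<le> 1" "\<And>m. m \<ge> 2 \<Longrightarrow> \<bar>x 1 - 2 * x m\<bar> \<le> 1"
  using assms Ysup[of x] by (auto simp: B_Y_def ell2_def)

lemma pairing_e1: "pairing a (e 1) = a 1"
  by (subst pairing_fin[of "{1}"]) (auto simp: unitvec_def)

lemma pairing_v: "m \<ge> 2 \<Longrightarrow> pairing a (\<lambda>j. e 1 j + e m j) = a 1 + a m"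
  by (subst pairing_fin[of "{1,m}"]) (auto simp: unitvec_def)

lemma pairing_w: "pairing a (\<lambda>j. -(1/2) * e n j) = -(1/2) * a n"
  by (subst pairing_fin[of "{n}"]) (auto simp: unitvec_def)




lemma comb_eq2:
  fixes u v c t :: real
  assumes "u \<le> c" "v \<le> c" "0 < t" "t < 1" "(1 - t) * u + t * v = c"
  shows "u = c" "v = c"
  using comb_eq[OF assms] by auto

lemma comb_ge:
  fixes u v c t :: real
  assumes "c \<le> u" "c \<le> v" "0 < t" "t < 1" "(1 - t) * u + t * v = c"
  shows "u = c" "v = c"
proof -
  have "(1 - t) * (-u) + t * (-v) = -c" using assms(5) by (simp add: algebra_simps)
  hence "-u = -c \<and> -v = -c" using comb_eq[of "-u" "-c" "-v" t] assms by simp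
  thus "u = c" "v = c" by auto
qed

lemma obtain_comb:
  assumes "\<exists>a\<in>S. \<exists>b\<in>S. a \<noteq> b \<and> (\<exists>t. 0 < t \<and> t < 1 \<and> y = (\<lambda>j. (1 - t) * a j + t * b j))"
  obtains a b t where "a \<in> S" "b \<in> S" "a \<noteq> b" "0 < t" "t < 1"
    "\<And>j. (1 - t) * a j + t * b j = y j"
  using assms by (metis (no_types, lifting))

lemma part1: "is_extreme_point (e 1) B_Y"
  unfolding is_extreme_point_def
proof (intro conjI notI)
  show "e 1 \<in> B_Y" by (rule e1_BY)
  assume "\<exists>a\<in>B_Y. \<exists>b\<in>B_Y. a \<noteq> b \<and> (\<exists>t. 0 < t \<and> t < 1 \<and> e 1 = (\<lambda>j. (1 - t) * a j + t * b j))"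
  then obtain a b t where ab: "a \<in> B_Y" "b \<in> B_Y" "a \<noteq> b" "0 < t" "t < 1"
    and h: "\<And>j. (1 - t) * a j + t * b j = e 1 j" by (rule obtain_comb) blast+
  have a1: "a 1 = 1" "b 1 = 1"
    using comb_eq2[of "a 1" 1 "b 1" t] BY_props(2)[OF ab(1)] BY_props(2)[OF ab(2)] ab h[of 1]
    by (auto simp: unitvec_def)
  have "a j = b j" for j
  proof -
    consider "j = 0" | "j = 1" | "j \<ge> 2" by linarith
    thus ?thesis
    proof cases
      case 1 then show ?thesis using BY_props(1)[OF ab(1)] BY_props(1)[OF ab(2)] by simp
    next
      case 2 then show ?thesis using a1 by simp
    next
      case 3
      have "0 \<le> a j" "0 \<le> b j"
        using BY_props(3)[OF ab(1) 3] BY_props(3)[OF ab(2) 3] a1 by (auto simp: abs_le_iff)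
      moreover have "(1 - t) * a j + t * b j = 0" using h[of j] 3 by (simp add: unitvec_def)
      ultimately show ?thesis using comb_ge[of 0 "a j" "b j" t] ab by simp
    qed
  qed
  hence "a = b" by auto
  thus False using ab by simp
qed

lemma part2: assumes "n \<ge> 2" shows "is_extreme_point (\<lambda>j. e 1 j + e n j) B_Y"
  unfolding is_extreme_point_def
proof (intro conjI notI)
  show "(\<lambda>j. e 1 j + e n j) \<in> B_Y" by (rule v_BY[OF assms])
  assume "\<exists>a\<in>B_Y. \<exists>b\<in>B_Y. a \<noteq> b \<and> (\<exists>t. 0 < t \<and> t < 1 \<and> (\<lambda>j. e 1 j + e n j) = (\<lambda>j. (1 - t) * a j + t * b j))"
  then obtain a b t where ab: "a \<in> B_Y" "b \<in> B_Y" "a \<noteq> b" "0 < t" "t < 1"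
    and h: "\<And>j. (1 - t) * a j + t * b j = e 1 j + e n j" by (rule obtain_comb) blast+
  have a1: "a 1 = 1" "b 1 = 1"
    using comb_eq2[of "a 1" 1 "b 1" t] BY_props(2)[OF ab(1)] BY_props(2)[OF ab(2)] ab h[of 1] assms
    by (auto simp: unitvec_def)
  have "a j = b j" for j
  proof -
    consider "j = 0" | "j = 1" | "j = n" | "j \<ge> 2" "j \<noteq> n" by linarith
    thus ?thesis
    proof cases
      case 1 then show ?thesis using BY_props(1)[OF ab(1)] BY_props(1)[OF ab(2)] by simp
    next
      case 2 then show ?thesis using a1 by simp
    next
      case 3
      have "a j \<le> 1" "b j \<le> 1"
        using BY_props(3)[OF ab(1)] BY_props(3)[OF ab(2)] a1 assms 3 by (auto simp: abs_le_iff)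
      moreover have "(1 - t) * a j + t * b j = 1" using h[of j] 3 assms by (simp add: unitvec_def)
      ultimately show ?thesis using comb_eq2[of "a j" 1 "b j" t] ab by simp
    next
      case 4
      have "0 \<le> a j" "0 \<le> b j"
        using BY_props(3)[OF ab(1) 4(1)] BY_props(3)[OF ab(2) 4(1)] a1 by (auto simp: abs_le_iff)
      moreover have "(1 - t) * a j + t * b j = 0" using h[of j] 4 by (simp add: unitvec_def)
      ultimately show ?thesis using comb_ge[of 0 "a j" "b j" t] ab by simp
    qed
  qed
  hence "a = b" by auto
  thus False using ab by simp
qed

lemma Ydual_props: assumes "a \<in> B_Ydual" shows "a 0 = 0"
  using assms by (simp add: B_Ydual_def ell2_def)

lemma part3: "is_extreme_point (e 1) B_Ydual"
  unfolding is_extreme_point_def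
proof (intro conjI notI)
  have "ydualnorm (e 1) \<le> 1" unfolding ydualnorm_def
  proof (rule cSUP_least)
    show "B_Y \<noteq> {}" using e1_BY by auto
    fix x assume x: "x \<in> B_Y"
    have "pairing (e 1) x = x 1" by (subst pairing_fin[of "{1}"]) (auto simp: unitvec_def)
    thus "pairing (e 1) x \<le> 1" using BY_props(2)[OF x] by simp
  qed
  thus "e 1 \<in> B_Ydual" using e1_ell2 by (simp add: B_Ydual_def)
  assume "\<exists>a\<in>B_Ydual. \<exists>b\<in>B_Ydual. a \<noteq> b \<and> (\<exists>t. 0 < t \<and> t < 1 \<and> e 1 = (\<lambda>j. (1 - t) * a j + t * b j))"
  then obtain a b t where ab: "a \<in> B_Ydual" "b \<in> B_Ydual" "a \<noteq> b" "0 < t" "t < 1"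
    and h: "\<And>j. (1 - t) * a j + t * b j = e 1 j" by (rule obtain_comb) blast+
  have a1: "a 1 = 1" "b 1 = 1"
    using comb_eq2[of "a 1" 1 "b 1" t] dual_le[OF ab(1) e1_BY, unfolded pairing_e1] dual_le[OF ab(2) e1_BY, unfolded pairing_e1] ab h[of 1]
    by (auto simp: unitvec_def pairing_e1)
  have "a j = b j" for j
  proof -
    consider "j = 0" | "j = 1" | "j \<ge> 2" by linarith
    thus ?thesis
    proof cases
      case 1 then show ?thesis using Ydual_props[OF ab(1)] Ydual_props[OF ab(2)] by simp
    next
      case 2 then show ?thesis using a1 by simp
    next
      case 3
      have "a j \<le> 0" "b j \<le> 0"
        using dual_le[OF ab(1) v_BY[OF 3]] dual_le[OF ab(2) v_BY[OF 3]] a1 pairing_v[OF 3] by auto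
      moreover have "(1 - t) * a j + t * b j = 0" using h[of j] 3 by (simp add: unitvec_def)
      ultimately show ?thesis using comb_eq2[of "a j" 0 "b j" t] ab by simp
    qed
  qed
  hence "a = b" by auto
  thus False using ab by simp
qed

lemma part4: assumes "n \<ge> 2" shows "is_extreme_point (\<lambda>j. e 1 j - 2 * e n j) B_Ydual"
  unfolding is_extreme_point_def
proof (intro conjI notI)
  have py: "pairing (\<lambda>j. e 1 j - 2 * e n j) x = x 1 - 2 * x n" for x
    using assms by (subst pairing_fin[of "{1,n}"]) (auto simp: unitvec_def)
  have "ydualnorm (\<lambda>j. e 1 j - 2 * e n j) \<le> 1" unfolding ydualnorm_def
  proof (rule cSUP_least)
    show "B_Y \<noteq> {}" using e1_BY by auto
    fix x assume x: "x \<in> B_Y"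
    show "pairing (\<lambda>j. e 1 j - 2 * e n j) x \<le> 1" using BY_props(3)[OF x assms] py[of x] by simp
  qed
  moreover have "(\<lambda>j. e 1 j - 2 * e n j) \<in> ell2"
    by (rule ell2_fin[of _ "{1,n}"]) (use assms in \<open>auto simp: unitvec_def\<close>)
  ultimately show "(\<lambda>j. e 1 j - 2 * e n j) \<in> B_Ydual" by (simp add: B_Ydual_def)
  assume "\<exists>a\<in>B_Ydual. \<exists>b\<in>B_Ydual. a \<noteq> b \<and> (\<exists>t. 0 < t \<and> t < 1 \<and> (\<lambda>j. e 1 j - 2 * e n j) = (\<lambda>j. (1 - t) * a j + t * b j))"
  then obtain a b t where ab: "a \<in> B_Ydual" "b \<in> B_Ydual" "a \<noteq> b" "0 < t" "t < 1"
    and h: "\<And>j. (1 - t) * a j + t * b j = e 1 j - 2 * e n j" by (rule obtain_comb) blast+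
  have a1: "a 1 = 1" "b 1 = 1"
    using comb_eq2[of "a 1" 1 "b 1" t] dual_le[OF ab(1) e1_BY, unfolded pairing_e1] dual_le[OF ab(2) e1_BY, unfolded pairing_e1] ab h[of 1] assms
    by (auto simp: unitvec_def pairing_e1)
  have "a j = b j" for j
  proof -
    consider "j = 0" | "j = 1" | "j = n" | "j \<ge> 2" "j \<noteq> n" by linarith
    thus ?thesis
    proof cases
      case 1 then show ?thesis using Ydual_props[OF ab(1)] Ydual_props[OF ab(2)] by simp
    next
      case 2 then show ?thesis using a1 by simp
    next
      case 3
      have l1: "-(1/2) * a j \<le> 1" and l2: "-(1/2) * b j \<le> 1"
        using dual_le[OF ab(1) w_BY[OF assms]] dual_le[OF ab(2) w_BY[OF assms]] 3 pairing_w by auto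
      have q: "(1 - t) * (-(1/2) * a j) + t * (-(1/2) * b j) = 1"
      proof -
        have "(1 - t) * a j + t * b j = -2" using h[of j] 3 assms by (simp add: unitvec_def)
        moreover have "(1 - t) * (-(1/2) * a j) + t * (-(1/2) * b j) = -(1/2) * ((1 - t) * a j + t * b j)"
          by (simp add: field_simps)
        ultimately show ?thesis by simp
      qed
      have "-(1/2) * a j = 1" "-(1/2) * b j = 1"
        using comb_eq2[OF l1 l2 ab(4) ab(5) q] by auto
      thus ?thesis by simp
    next
      case 4
      have "a 1 + a j \<le> 1" "b 1 + b j \<le> 1"
        using dual_le[OF ab(1) v_BY[OF 4(1)]] dual_le[OF ab(2) v_BY[OF 4(1)]] pairing_v[OF 4(1)] by auto
      moreover have "(1 - t) * (a 1 + a j) + t * (b 1 + b j) = 1"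
      proof -
        have "(1 - t) * (a 1 + a j) + t * (b 1 + b j) = ((1 - t) * a 1 + t * b 1) + ((1 - t) * a j + t * b j)"
          by (simp add: algebra_simps)
        also have "\<dots> = 1" using h[of 1] h[of j] 4 assms by (simp add: unitvec_def)
        finally show ?thesis .
      qed
      ultimately have "a 1 + a j = 1" "b 1 + b j = 1"
        using comb_eq2[of "a 1 + a j" 1 "b 1 + b j" t] ab by auto
      thus ?thesis using a1 by simp
    qed
  qed
  hence "a = b" by auto
  thus False using ab by simp
qed

theorem proposition3p5:
  shows "is_extreme_point (e 1) B_Y \<and>
         (\<forall>n\<ge>2. is_extreme_point (\<lambda>j. e 1 j + e n j) B_Y) \<and>
         is_extreme_point (e 1) B_Ydual \<and>
         (\<forall>n\<ge>2. is_extreme_point (\<lambda>j. e 1 j - 2 * e n j) B_Ydual)"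
  using part1 part2 part3 part4 by blast


end
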